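(* Let $0<q<1$, $0\le p<1$. Let $k_n(x)=q^{-n}S_n(qx;pq,q)$ (the monic kernel polynomials of $S_n(x;p,q)$), with recurrence $k_n(x)=(x-d_n)k_{n-1}(x)-\nu_nk_{n-2}(x)$, $n\ge1$, $k_{-1}=0$, $k_0=1$, and let $\beta_n=\nu_{n+1}/(d_nd_{n+1})$, $n\ge1$. Then \[ \beta_n=\frac{q(1-q^n)(1-pq^n)}{(1+q-(1+p)q^n)(1+q-(1+p)q^{n+1})},\quad n\ge1; \] the maximal and minimal parameter sequences of $(\beta_n)$ are \[ M_n=\frac{q}{1+q-(1+p)q^{n+1}}\frac{\Delta_n}{\Delta_{n+1}},\qquad m_n=\frac{q(1-q^n)}{1+q-(1+p)q^{n+1}},\quad n\ge0; \] and the sequence \[ h_n=\frac{q(1-pq^n)}{1+q-(1+p)q^{n+1}},\quad n\ge0, \] is a parameter sequence of $(\beta_n)$ whose shell polynomials $p^h_n$ are exactly the monic generalized Stieltjes–Wigert polynomials $S_n(x;p,q)$.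
   Context: $(a;q)_n=\prod_{k=1}^n(1-aq^{k-1})$ for $n\in\{0,1,\dots\}\cup\{\infty\}$, $\begin{bmatrix}n\\k\end{bmatrix}_q=\frac{(q;q)_n}{(q;q)_k(q;q)_{n-k}}$, and $\Delta_n=(pq^n;q)_\infty-(q^n;q)_\infty$. The monic generalized Stieltjes–Wigert polynomials are $S_n(x;p,q)=(-1)^nq^{-n(n+1/2)}(p;q)_n\sum_{k=0}^n\begin{bmatrix}n\\k\end{bmatrix}_q\frac{q^{k^2}(-\sqrt q x)^k}{(p;q)_k}$. A parameter sequence for a chain sequence $(\beta_n)_{n\ge1}$ is a sequence $(h_n)_{n\ge0}$ with $0\le h_0<1$, $0<h_n<1$ for $n\ge1$, and $\beta_n=h_n(1-h_{n-1})$ for $n\ge1$; the minimal parameter sequence is the one with $h_0=0$, and the maximal one is the one whose initial value $h_0$ is the largest possible. Given a parameter sequence $(h_n)$ with $h_0>0$, the shell polynomials $p^h_n$ are the monic polynomials defined by $p^h_n(x)=(x-c^h_n)p^h_{n-1}(x)-\lambda^h_np^h_{n-2}(x)$, $p^h_{-1}=0$, $p^h_0=1$, where $c_1^h=h_0d_1$, $c_{n+1}^h=(1-h_{n-1})d_n+h_nd_{n+1}$ and $\lambda_{n+1}^h=(1-h_{n-1})h_{n-1}d_n^2$ for $n\ge1$. *)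

theory Defs
  imports "HOL-Analysis.Analysis"
begin

definition qpoch :: "real \<Rightarrow> real \<Rightarrow> nat \<Rightarrow> real" where
  "qpoch a q n = (\<Prod>k<n. 1 - a * q ^ k)"

definition qpoch_inf :: "real \<Rightarrow> real \<Rightarrow> real" where
  "qpoch_inf a q = (\<Prod>k. 1 - a * q ^ k)"

definition qbinom :: "real \<Rightarrow> nat \<Rightarrow> nat \<Rightarrow> real" where
  "qbinom q n k = qpoch q q n / (qpoch q q k * qpoch q q (n - k))"

definition Delta :: "real \<Rightarrow> real \<Rightarrow> nat \<Rightarrow> real" where
  "Delta p q n = qpoch_inf (p * q ^ n) q - qpoch_inf (q ^ n) q"

definition SW :: "nat \<Rightarrow> real \<Rightarrow> real \<Rightarrow> real \<Rightarrow> real" where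
  "SW n x p q = (-1) ^ n * q powr (- (real n * (real n + 1/2))) * qpoch p q n *
     (\<Sum>k\<le>n. qbinom q n k * q ^ (k^2) * (- sqrt q * x) ^ k / qpoch p q k)"

definition kern :: "real \<Rightarrow> real \<Rightarrow> nat \<Rightarrow> real \<Rightarrow> real" where
  "kern p q n x = SW n (q * x) (p * q) q / q ^ n"

definition param_seq :: "(nat \<Rightarrow> real) \<Rightarrow> (nat \<Rightarrow> real) \<Rightarrow> bool" where
  "param_seq \<beta> h \<longleftrightarrow> 0 \<le> h 0 \<and> h 0 < 1 \<and> (\<forall>n\<ge>1. 0 < h n \<and> h n < 1)
     \<and> (\<forall>n\<ge>1. \<beta> n = h n * (1 - h (n - 1)))"

definition minimal_param_seq :: "(nat \<Rightarrow> real) \<Rightarrow> (nat \<Rightarrow> real) \<Rightarrow> bool" where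
  "minimal_param_seq \<beta> h \<longleftrightarrow> param_seq \<beta> h \<and> h 0 = 0"

definition maximal_param_seq :: "(nat \<Rightarrow> real) \<Rightarrow> (nat \<Rightarrow> real) \<Rightarrow> bool" where
  "maximal_param_seq \<beta> h \<longleftrightarrow> param_seq \<beta> h \<and> (\<forall>g. param_seq \<beta> g \<longrightarrow> g 0 \<le> h 0)"

text \<open>Shell polynomials p^h_n built from parameter sequence h and the coefficients d_n:
  c_1 = h_0 d_1, c_(n+1) = (1-h_(n-1)) d_n + h_n d_(n+1),
  lambda_(n+1) = (1-h_(n-1)) h_(n-1) d_n^2  (n \<ge> 1).\<close>
fun shell :: "(nat \<Rightarrow> real) \<Rightarrow> (nat \<Rightarrow> real) \<Rightarrow> nat \<Rightarrow> real \<Rightarrow> real" where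
  "shell h d 0 x = 1"
| "shell h d (Suc 0) x = x - h 0 * d 1"
| "shell h d (Suc (Suc n)) x =
     (x - ((1 - h n) * d (Suc n) + h (Suc n) * d (Suc (Suc n)))) * shell h d (Suc n) x
     - (1 - h n) * h n * (d (Suc n))^2 * shell h d n x"

end

theory Submission
  imports Defs "HOL-Computational_Algebra.Polynomial"
begin

lemma qpoch_Suc: "qpoch a q (Suc n) = qpoch a q n * (1 - a * q ^ n)"
  by (simp add: qpoch_def)

lemma qpoch_0[simp]: "qpoch a q 0 = 1"
  by (simp add: qpoch_def)

lemma qpoch_pos:
  assumes "0 < q" "q < 1" "a < 1"
  shows "qpoch a q n > 0"
  unfolding qpoch_def
proof (rule prod_pos)
  fix k assume "k \<in> {..<n}"
  have "a * q ^ k < 1"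
  proof (cases "a \<le> 0")
    case True
    then have "a * q^k \<le> 0" using assms by (simp add: mult_nonpos_nonneg)
    then show ?thesis by simp
  next
    case False
    have "q ^ k \<le> 1" using assms by (simp add: power_le_one)
    then have "a * q^k \<le> a" using False by (simp add: mult_left_le)
    then show ?thesis using assms by simp
  qed
  then show "0 < 1 - a * q ^ k" by simp
qed

lemma alg:
  fixes q p X Y C :: real
  assumes d1: "1 - q*Y \<noteq> 0" and d2: "1 - q*q*Y \<noteq> 0"
  defines "N \<equiv> q*X*Y"
  shows "(1-p*(q*N)) * (C*(1-q*N)*(1-q*q*N)/((1-q*Y)*(1-q*q*Y))) =
    (1-p*X) * (q^4*Y^2) * (C*(1-q*N)*(1-q*X)/((1-q*Y)*(1-q*q*Y)))
    + (1 + q - q*q*N - p*q*N) * (C*(1-q*N)/(1-q*Y)) - q*(1-q*N)*C"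
proof -
  define K where "K = C*(1-q*N)/((1-q*Y)*(1-q*q*Y))"
  have h: "(1-p*(q*N))*(1-q*q*N) = (1-p*X)*(q^4*Y^2)*(1-q*X) + (1 + q - q*q*N - p*q*N)*(1-q*q*Y) - q*(1-q*Y)*(1-q*q*Y)"
    unfolding N_def by (simp add: algebra_simps power2_eq_square power4_eq_xxxx)
  have e1: "C*(1-q*N)/(1-q*Y) = K*(1-q*q*Y)" unfolding K_def using d1 d2 by (simp add: divide_simps)
  have e2: "q*(1-q*N)*C = K * (q*(1-q*Y)*(1-q*q*Y))" unfolding K_def using d1 d2 by (simp add: divide_simps)
  have e3: "C*(1-q*N)*(1-q*q*N)/((1-q*Y)*(1-q*q*Y)) = K*(1-q*q*N)" unfolding K_def by simp
  have e4: "C*(1-q*N)*(1-q*X)/((1-q*Y)*(1-q*q*Y)) = K*(1-q*X)" unfolding K_def by simp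
  show ?thesis unfolding e1 e2 e3 e4
    by (metis (no_types, lifting) h mult.assoc mult.left_commute right_diff_distrib distrib_left)
qed

lemma qpoch_q_pos: "0 < q \<Longrightarrow> q < 1 \<Longrightarrow> qpoch q q n > 0"
  by (rule qpoch_pos) auto

lemma one_minus_qpow_pos: "0 < q \<Longrightarrow> q < 1 \<Longrightarrow> 0 < n \<Longrightarrow> 1 - q^n > (0::real)"
  by (simp add: power_less_one_iff)

lemma qbinom_self: "0 < q \<Longrightarrow> q < 1 \<Longrightarrow> qbinom q n n = 1"
  using qpoch_q_pos[of q n] by (simp add: qbinom_def)

lemma qbinom_0: "0 < q \<Longrightarrow> q < 1 \<Longrightarrow> qbinom q n 0 = 1"
  using qpoch_q_pos[of q n] by (simp add: qbinom_def)

lemma qbinom_L1: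
  assumes "0 < q" "q < 1" "k \<le> n"
  shows "qbinom q (Suc n) k * (1 - q^(Suc n - k)) = qbinom q n k * (1 - q^(Suc n))"
proof -
  have e: "Suc n - k = Suc (n - k)" using assms by auto
  have p1: "qpoch q q k > 0" "qpoch q q (n-k) > 0" "qpoch q q n > 0" using assms qpoch_q_pos by auto
  have p2: "1 - q * q^(n-k) > 0" using one_minus_qpow_pos[OF assms(1,2), of "Suc (n-k)"] by simp
  show ?thesis unfolding qbinom_def e using p1 p2
    by (simp add: qpoch_Suc field_simps)
qed

lemma qbinom_L3:
  assumes "0 < q" "q < 1" "k < N"
  shows "qbinom q N (Suc k) * (1 - q^(Suc k)) = qbinom q N k * (1 - q^(N - k))"
proof -
  have e: "N - k = Suc (N - Suc k)" using assms by auto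
  have p1: "qpoch q q k > 0" "qpoch q q (N - Suc k) > 0" "qpoch q q N > 0" using assms qpoch_q_pos by auto
  have p2: "1 - q * q^(N - Suc k) > 0" "1 - q * q^k > 0"
    using one_minus_qpow_pos[OF assms(1,2), of "Suc (N - Suc k)"] one_minus_qpow_pos[OF assms(1,2), of "Suc k"] by simp_all
  show ?thesis unfolding qbinom_def e using p1 p2
    by (simp add: qpoch_Suc field_simps)
qed

lemma qbinom_Suc_self:
  assumes "0 < q" "q < 1"
  shows "qbinom q (Suc n) n = (1 - q^(Suc n)) / (1 - q)"
proof -
  have p1: "qpoch q q n > 0" using assms qpoch_q_pos by auto
  have "Suc n - n = Suc 0" by simp
  then show ?thesis unfolding qbinom_def using p1 assms by (simp add: qpoch_Suc field_simps)
qed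

definition qb :: "real \<Rightarrow> nat \<Rightarrow> nat \<Rightarrow> real" where
  "qb q n k = (if k \<le> n then qbinom q n k else 0)"

lemma alg2:
  fixes q p Z :: real
  assumes "q \<noteq> 1"
  shows "(1-p*(q*Z))*((1-q*(q*Z))/(1-q)) = (1-p*Z)*q^2*((1-q*Z)/(1-q)) + (1+q-q*(q*Z)-p*(q*Z))"
proof -
  have "1 - q \<noteq> 0" using assms by simp
  then show ?thesis by (simp add: field_simps power2_eq_square)
qed

lemma qbid:
  assumes q: "0 < q" "q < 1" and j: "j \<le> Suc n"
  shows "(1 - p*q^(Suc n)) * qb q (Suc (Suc n)) (Suc j) =
    (1 - p*q^j) * q^(2*(Suc n - j)) * qb q (Suc n) j
    + (1 + q - q^(Suc (Suc n)) - p*q^(Suc n)) * qb q (Suc n) (Suc j)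
    - q * (1 - q^(Suc n)) * qb q n (Suc j)"
proof -
  consider "Suc j \<le> n" | "j = n" | "j = Suc n" using j by linarith
  then show ?thesis
  proof cases
    case 1
    define m where "m = n - Suc j"
    have n: "n = Suc (j + m)" using 1 unfolding m_def by simp
    define C where "C = qbinom q n (Suc j)"
    define B where "B = qbinom q (Suc n) (Suc j)"
    define T where "T = qbinom q (Suc (Suc n)) (Suc j)"
    define A where "A = qbinom q (Suc n) j"
    define X where "X = q^j"
    define Y where "Y = q^m"
    have qn: "q^n = q*X*Y" unfolding n X_def Y_def by (simp add: power_add)
    have d1: "1 - q*Y \<noteq> 0" and d2: "1 - q*q*Y \<noteq> 0"
      using one_minus_qpow_pos[OF q, of "Suc m"] one_minus_qpow_pos[OF q, of "Suc (Suc m)"]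
      unfolding Y_def by auto
    have hB: "B * (1 - q*Y) = C * (1 - q*(q^n))"
      using qbinom_L1[OF q 1] unfolding B_def C_def Y_def n by simp
    have hT: "T * (1 - q*q*Y) = B * (1 - q*q*(q^n))"
      using qbinom_L1[OF q, of "Suc j" "Suc n"] 1 unfolding B_def T_def Y_def n by (simp add: mult.assoc)
    have hA: "B * (1 - q*X) = A * (1 - q*q*Y)"
      using qbinom_L3[OF q, of j "Suc n"] 1 unfolding B_def A_def X_def Y_def n by simp
    have B': "B = C*(1-q*(q*X*Y))/(1-q*Y)" using hB d1 qn by (simp add: field_simps)
    have T': "T = C*(1-q*(q*X*Y))*(1-q*q*(q*X*Y))/((1-q*Y)*(1-q*q*Y))"
    proof -
      have "T = B * (1 - q*q*(q^n)) / (1-q*q*Y)" using hT d2 by (simp add: field_simps)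
      then show ?thesis unfolding B' qn by simp
    qed
    have A': "A = C*(1-q*(q*X*Y))*(1-q*X)/((1-q*Y)*(1-q*q*Y))"
    proof -
      have "A = B * (1 - q*X) / (1-q*q*Y)" using hA d2 by (simp add: field_simps)
      then show ?thesis unfolding B' by simp
    qed
    have pw: "q^(2*(Suc n - j)) = q^4*Y^2"
    proof -
      have "2*(Suc n - j) = 4 + 2*m" using n by simp
      moreover have "(q^m)^2 = q^(m*2)" by (metis power_mult)
      ultimately show ?thesis unfolding Y_def by (simp add: power_add mult.commute)
    qed
    have e: "qb q (Suc (Suc n)) (Suc j) = T" "qb q (Suc n) j = A" "qb q (Suc n) (Suc j) = B"
       "qb q n (Suc j) = C" using 1 unfolding qb_def T_def A_def B_def C_def by auto
    have H: "(1-p*(q*(q*X*Y))) * T = (1-p*X) * (q^4*Y^2) * A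
      + (1 + q - q*q*(q*X*Y) - p*q*(q*X*Y)) * B - q*(1-q*(q*X*Y))*C"
      unfolding T' A' B' by (rule alg[OF d1 d2])
    have h1: "q^(Suc n) = q*(q*X*Y)" "q^(Suc (Suc n)) = q*q*(q*X*Y)" "q^j = X" using qn X_def by simp_all
    show ?thesis unfolding e pw h1 using H by (simp only: mult.assoc)
  next
    case 2
    have e: "qb q (Suc (Suc n)) (Suc j) = (1 - q^(Suc (Suc n))) / (1 - q)"
      "qb q (Suc n) j = (1 - q^(Suc n)) / (1 - q)" "qb q (Suc n) (Suc j) = 1"
       "qb q n (Suc j) = 0" using 2 q unfolding qb_def by (auto simp: qbinom_Suc_self qbinom_self)
    have pw: "q^(2*(Suc n - j)) = q^2" using 2 by simp
    have "1 - q \<noteq> 0" using q by simp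
    have "(1-p*(q*q^n))*((1-q*(q*q^n))/(1-q)) = (1-p*q^n)*q^2*((1-q*q^n)/(1-q)) + (1+q-q*(q*q^n)-p*(q*q^n))"
      by (rule alg2) (use q in simp)
    then show ?thesis unfolding e pw using 2 by simp
  next
    case 3
    have e: "qb q (Suc (Suc n)) (Suc j) = 1"
      "qb q (Suc n) j = 1" "qb q (Suc n) (Suc j) = 0"
       "qb q n (Suc j) = 0" using 3 q unfolding qb_def by (auto simp: qbinom_self)
    then show ?thesis using 3 by simp
  qed
qed

definition sg :: "real \<Rightarrow> nat \<Rightarrow> real" where
  "sg q n = (-1)^n / (q^(n^2) * sqrt q ^ n)"
definition GG :: "real \<Rightarrow> real \<Rightarrow> nat \<Rightarrow> real" where
  "GG p q k = q^(k^2) * (- sqrt q)^k / qpoch p q k"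
definition bc :: "real \<Rightarrow> real \<Rightarrow> nat \<Rightarrow> nat \<Rightarrow> real" where
  "bc p q n k = sg q n * qpoch p q n * qb q n k * GG p q k"

lemma powr_SW:
  assumes "0 < q"
  shows "q powr (- (real n * (real n + 1/2))) = 1 / (q^(n^2) * sqrt q ^ n)"
proof -
  have a0: "sqrt q = q powr (1/2)" using assms by (simp only: powr_half_sqrt less_imp_le)
  have a: "sqrt q ^ n = q powr (real n * (1/2))"
    unfolding a0 by (rule powr_power) (use assms in simp)
  have b: "q^(n^2) = q powr (real (n^2))" by (rule powr_realpow[symmetric, OF assms])
  have e: "real (n^2) + real n * (1/2) = real n * (real n + 1/2)"
    by (simp only: of_nat_power power2_eq_square distrib_left mult_1_right of_nat_mult)
  have c: "q^(n^2) * sqrt q ^ n = q powr (real n * (real n + 1/2))"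
    unfolding a b e[symmetric] by (rule powr_add[symmetric])
  show ?thesis unfolding c powr_minus by (rule inverse_eq_divide)
qed

lemma coef_rearr:
  fixes P :: "nat \<Rightarrow> real" and Qb :: "nat \<Rightarrow> nat \<Rightarrow> real"
  assumes "k \<le> n"
  shows "(-1)^n / (q^(n^2) * sqrt q ^ n) * P n * (if k \<le> n then Qb n k else 0) * (q^(k^2) * (- sqrt q)^k / P k) * x ^ k = (-1) ^ n * (1 / (q ^ n\<^sup>2 * sqrt q ^ n)) * P n *
         (Qb n k * q ^ k\<^sup>2 * ((- sqrt q)^k * x ^ k) / P k)"
  using assms by simp

lemma SW_sum:
  assumes "0 < q" "n \<le> N"
  shows "SW n x p q = (\<Sum>k\<le>N. bc p q n k * x^k)"
proof -
  have "(\<Sum>k\<le>N. bc p q n k * x^k) = (\<Sum>k\<le>n. bc p q n k * x^k)"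
  proof (rule sum.mono_neutral_right)
    show "\<forall>i\<in>{..N} - {..n}. bc p q n i * x ^ i = 0"
    proof
      fix i assume "i \<in> {..N} - {..n}"
      then have "\<not> i \<le> n" by simp
      then show "bc p q n i * x ^ i = 0" unfolding bc_def qb_def by simp
    qed
    show "finite {..N}" by simp
    show "{..n} \<subseteq> {..N}" using assms(2) by simp
  qed
  also have "\<dots> = SW n x p q"
    unfolding SW_def powr_SW[OF assms(1)] sum_distrib_left
  proof (rule sum.cong)
    fix k assume "k \<in> {..n}"
    then have "k \<le> n" by simp
    then show "bc p q n k * x ^ k = (-1) ^ n * (1 / (q ^ n\<^sup>2 * sqrt q ^ n)) * qpoch p q n *
         (qbinom q n k * q ^ k\<^sup>2 * (- sqrt q * x) ^ k / qpoch p q k)"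
      unfolding bc_def qb_def sg_def GG_def power_mult_distrib by (rule coef_rearr)
  qed (rule refl)
  finally show ?thesis by (rule sym)
qed

definition cc :: "real \<Rightarrow> real \<Rightarrow> nat \<Rightarrow> real" where
  "cc p q m = (1 - q^m)/(sqrt q * q^(2*m)) + (1 - p*q^m)/(sqrt q * q^(2*m+1))"
definition lam :: "real \<Rightarrow> real \<Rightarrow> nat \<Rightarrow> real" where
  "lam p q n = (1 - q^(Suc n))*(1 - p*q^n)/q^(4*n+4)"

lemma sqrt_sq: "0 < q \<Longrightarrow> sqrt q * sqrt q = q" by simp

lemma sg_Suc: "0 < q \<Longrightarrow> sg q (Suc n) = - sg q n / (q^(2*n+1) * sqrt q)"
proof -
  assume q: "0 < q"
  have e: "(Suc n)^2 = n^2 + (2*n+1)" by (simp add: power2_eq_square)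
  have "q^(Suc n ^2) = q^(n^2) * q^(2*n+1)" unfolding e by (rule power_add)
  moreover have "sqrt q ^ Suc n = sqrt q ^ n * sqrt q" by simp
  ultimately show ?thesis unfolding sg_def using q by (simp add: field_simps)
qed

lemma sg_SS: "0 < q \<Longrightarrow> sg q (Suc (Suc n)) = sg q n / (q^(2*n+1) * q^(2*n+3) * q)"
proof -
  assume q: "0 < q"
  have s: "sqrt q * sqrt q = q" using q by simp
  have x: "2 * Suc n + 1 = 2*n+3" by simp
  have "sg q (Suc (Suc n)) = sg q n / ((q^(2*n+1) * q^(2*n+3)) * (sqrt q * sqrt q))"
    unfolding sg_Suc[OF q] x using q by (simp add: divide_simps)
  then show ?thesis unfolding s .
qed

lemma GG_Suc: "0 < q \<Longrightarrow> 1 - p*q^k \<noteq> 0 \<Longrightarrow> GG p q (Suc k) = GG p q k * (q^(2*k+1) * (- sqrt q)) / (1 - p*q^k)"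
proof -
  assume q: "0 < q" and ne: "1 - p*q^k \<noteq> 0"
  have e: "(Suc k)^2 = k^2 + (2*k+1)" by (simp add: power2_eq_square)
  have "q^(Suc k ^2) = q^(k^2) * q^(2*k+1)" unfolding e by (rule power_add)
  then show ?thesis unfolding GG_def using q ne by (simp add: qpoch_Suc field_simps)
qed

lemma sgGG:
  assumes q: "0 < q" and ne: "1 - p*q^j \<noteq> 0"
  shows "sg q (Suc n) * GG p q j = sg q n * GG p q (Suc j) * (1 - p*q^j) / (q^(2*n+1) * q^(2*j+1) * q)"
proof -
  have s: "sqrt q * sqrt q = q" using q by simp
  have "sg q (Suc n) * GG p q j = sg q n * GG p q (Suc j) * (1 - p*q^j) / (q^(2*n+1) * q^(2*j+1) * (sqrt q * sqrt q))"
    unfolding sg_Suc[OF q] GG_Suc[OF q ne] using q ne by (simp add: divide_simps)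
  then show ?thesis unfolding s .
qed

lemma cc_alg:
  fixes r a Q p g :: real
  assumes "r > 0" "a > 0"
  shows "((1-Q)/(r*(a*(r * r))) + (1-p*Q)/(r*(a*(r * r)*(r * r)))) * (-g/(a*r)) = -g*(1+(r * r)-(r * r)*Q-p*Q)/(a*(a*(r * r)*(r * r))*(r * r))"
  using assms by (simp add: field_simps) (simp add: algebra_simps)?

lemma cc_sg:
  assumes q: "0 < q"
  shows "cc p q (Suc n) * sg q (Suc n) = - sg q n * (1 + q - q^(Suc (Suc n)) - p*q^(Suc n)) / (q^(2*n+1) * q^(2*n+3) * q)"
proof -
  define r where "r = sqrt q"
  have r: "q = r * r" "r > 0" unfolding r_def using q by simp_all
  define a where "a = q^(2*n+1)"
  have a: "a > 0" unfolding a_def using q by simp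
  have e1: "q^(2*Suc n) = a * q" "q^(2*Suc n + 1) = a*q*q" "q^(2*n+3) = a*q*q" "q^(Suc (Suc n)) = q * q^(Suc n)"
    unfolding a_def by (simp_all add: power_add power_Suc mult_ac power3_eq_cube)
  show ?thesis
    unfolding cc_def sg_Suc[OF q] e1 r_def[symmetric] a_def[symmetric]
    using cc_alg[OF r(2) a, of "q^Suc n" p "sg q n"] unfolding r(1)[symmetric] by simp
qed

lemma ne_pq: "0 < q \<Longrightarrow> q < 1 \<Longrightarrow> p < 1 \<Longrightarrow> 1 - p*q^k > (0::real)"
proof -
  assume q: "0 < q" "q < 1" and p: "p < 1"
  have "0 < qpoch p q (Suc k)" using qpoch_pos[OF q p] .
  then show ?thesis unfolding qpoch_Suc using qpoch_pos[OF q p, of k]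
    by (simp add: zero_less_mult_iff)
qed

lemma coef_Suc:
  assumes q: "0 < q" "q < 1" and p: "p < 1" and j: "j \<le> Suc n"
  shows "bc p q (Suc (Suc n)) (Suc j) = bc p q (Suc n) j - cc p q (Suc n) * bc p q (Suc n) (Suc j)
           - lam p q n * bc p q n (Suc j)"
proof -
  define K where "K = q^(2*n+1) * q^(2*n+3) * q"
  have K: "K > 0" unfolding K_def using q by simp
  have ne: "\<And>k. 1 - p*q^k \<noteq> 0" using ne_pq[OF q p] by (metis less_irrefl)
  define W where "W = sg q n * qpoch p q n * GG p q (Suc j) * (1 - p*q^n) / K"
  define T where "T = qb q (Suc (Suc n)) (Suc j)"
  define A where "A = qb q (Suc n) j"
  define B where "B = qb q (Suc n) (Suc j)"
  define C where "C = qb q n (Suc j)"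
  have K1: "K = q^(4*n+4) * q"
  proof -
    have "2*n+1 + (2*n+3) + 1 = 4*n+4 + 1" by simp
    then show ?thesis unfolding K_def by (metis power_add power_one_right)
  qed
  have K2: "K = q^(2*n+1) * q^(2*j+1) * q * q^(2*(Suc n - j))"
  proof -
    have "2*n+1 + (2*n+3) + 1 = 2*n+1 + (2*j+1) + 1 + 2*(Suc n - j)" using j by simp
    then show ?thesis unfolding K_def by (metis power_add power_one_right)
  qed
  have f1: "bc p q (Suc (Suc n)) (Suc j) = W * (1 - p*q^(Suc n)) * T"
    unfolding bc_def W_def T_def sg_SS[OF q(1)] K_def[symmetric] qpoch_Suc
    by (simp add: divide_inverse mult_ac)
  have f2: "bc p q (Suc n) j = W * (1 - p*q^j) * q^(2*(Suc n - j)) * A"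
  proof -
    have "bc p q (Suc n) j = sg q (Suc n) * GG p q j * qpoch p q (Suc n) * A"
      unfolding bc_def A_def by (simp add: mult_ac)
    also have "\<dots> = sg q n * GG p q (Suc j) * (1 - p * q ^ j) / (q^(2*n+1) * q^(2*j+1) * q) * (qpoch p q n * (1 - p*q^n)) * A"
      unfolding sgGG[OF q(1) ne] qpoch_Suc by simp
    also have "\<dots> = W * (1 - p*q^j) * q^(2*(Suc n - j)) * A"
    proof -
      have "W * q^(2*(Suc n - j)) = sg q n * qpoch p q n * GG p q (Suc j) * (1 - p*q^n) / (q^(2*n+1) * q^(2*j+1) * q)"
        unfolding W_def K2 using q by simp
      then show ?thesis by (simp add: divide_inverse mult_ac)
    qed
    finally show ?thesis .
  qed
  have f3: "cc p q (Suc n) * bc p q (Suc n) (Suc j) = - W * (1 + q - q^(Suc (Suc n)) - p*q^(Suc n)) * B"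
  proof -
    have "cc p q (Suc n) * bc p q (Suc n) (Suc j) = (cc p q (Suc n) * sg q (Suc n)) * qpoch p q (Suc n) * B * GG p q (Suc j)"
      unfolding bc_def B_def by (simp add: mult_ac)
    also have "\<dots> = - W * (1 + q - q^(Suc (Suc n)) - p*q^(Suc n)) * B"
      unfolding cc_sg[OF q(1)] W_def K_def qpoch_Suc by (simp add: divide_inverse mult_ac)
    finally show ?thesis .
  qed
  have f4: "lam p q n * bc p q n (Suc j) = W * q * (1 - q^(Suc n)) * C"
  proof -
    have "W * q = sg q n * qpoch p q n * GG p q (Suc j) * (1 - p*q^n) / q^(4*n+4)"
      unfolding W_def K1 using q by simp
    then show ?thesis unfolding lam_def bc_def C_def by (simp add: divide_inverse mult_ac)
  qed
  have id: "(1 - p*q^(Suc n)) * T = (1 - p*q^j) * q^(2*(Suc n - j)) * A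
    + (1 + q - q^(Suc (Suc n)) - p*q^(Suc n)) * B - q * (1 - q^(Suc n)) * C"
    unfolding T_def A_def B_def C_def by (rule qbid[OF q j])
  show ?thesis unfolding f1 f2 f3 f4
  proof -
    have "W * (1 - p * q ^ Suc n) * T = W * ((1 - p*q^(Suc n)) * T)" by simp
    also have "\<dots> = W * ((1 - p*q^j) * q^(2*(Suc n - j)) * A
      + (1 + q - q^(Suc (Suc n)) - p*q^(Suc n)) * B - q * (1 - q^(Suc n)) * C)" unfolding id ..
    finally show "W * (1 - p * q ^ Suc n) * T = W * (1 - p * q ^ j) * q ^ (2 * (Suc n - j)) * A -
      - W * (1 + q - q ^ Suc (Suc n) - p * q ^ Suc n) * B - W * q * (1 - q ^ Suc n) * C"
      by (simp add: algebra_simps)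
  qed
qed

lemma coef_0:
  assumes q: "0 < q" "q < 1" and p: "p < 1"
  shows "bc p q (Suc (Suc n)) 0 = - (cc p q (Suc n) * bc p q (Suc n) 0) - lam p q n * bc p q n 0"
proof -
  define K where "K = q^(2*n+1) * q^(2*n+3) * q"
  define W where "W = sg q n * qpoch p q n * GG p q 0 * (1 - p*q^n) / K"
  have K1: "K = q^(4*n+4) * q"
  proof -
    have "2*n+1 + (2*n+3) + 1 = 4*n+4 + 1" by simp
    then show ?thesis unfolding K_def by (metis power_add power_one_right)
  qed
  have qb0: "\<And>m. qb q m 0 = 1" unfolding qb_def using qbinom_0[OF q] by simp
  have f1: "bc p q (Suc (Suc n)) 0 = W * (1 - p*q^(Suc n))"
    unfolding bc_def W_def qb0 sg_SS[OF q(1)] K_def[symmetric] qpoch_Suc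
    by (simp add: divide_inverse mult_ac)
  have f3: "cc p q (Suc n) * bc p q (Suc n) 0 = - W * (1 + q - q^(Suc (Suc n)) - p*q^(Suc n))"
  proof -
    have "cc p q (Suc n) * bc p q (Suc n) 0 = (cc p q (Suc n) * sg q (Suc n)) * qpoch p q (Suc n) * GG p q 0"
      unfolding bc_def qb0 by (simp add: mult_ac)
    also have "\<dots> = - W * (1 + q - q^(Suc (Suc n)) - p*q^(Suc n))"
      unfolding cc_sg[OF q(1)] W_def K_def qpoch_Suc by (simp add: divide_inverse mult_ac)
    finally show ?thesis .
  qed
  have f4: "lam p q n * bc p q n 0 = W * q * (1 - q^(Suc n))"
  proof -
    have "W * q = sg q n * qpoch p q n * GG p q 0 * (1 - p*q^n) / q^(4*n+4)"
      unfolding W_def K1 using q by simp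
    then show ?thesis unfolding lam_def bc_def qb0 by (simp add: divide_inverse mult_ac)
  qed
  show ?thesis unfolding f1 f3 f4 by (simp add: algebra_simps)
qed

lemma SW_rec:
  assumes q: "0 < q" "q < 1" and p: "p < 1"
  shows "SW (Suc (Suc n)) x p q = (x - cc p q (Suc n)) * SW (Suc n) x p q - lam p q n * SW n x p q"
proof -
  have L: "SW (Suc (Suc n)) x p q = bc p q (Suc (Suc n)) 0 + (\<Sum>j\<le>Suc n. bc p q (Suc (Suc n)) (Suc j) * x^Suc j)"
  proof -
    have "SW (Suc (Suc n)) x p q = (\<Sum>k\<le>Suc (Suc n). bc p q (Suc (Suc n)) k * x^k)" by (rule SW_sum[OF q(1)]) simp
    also have "\<dots> = bc p q (Suc (Suc n)) 0 * x^0 + (\<Sum>j\<le>Suc n. bc p q (Suc (Suc n)) (Suc j) * x^Suc j)" by (rule sum.atMost_Suc_shift)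
    finally show ?thesis by simp
  qed
  have M1: "SW (Suc n) x p q = bc p q (Suc n) 0 + (\<Sum>j\<le>Suc n. bc p q (Suc n) (Suc j) * x^Suc j)"
  proof -
    have "SW (Suc n) x p q = (\<Sum>k\<le>Suc (Suc n). bc p q (Suc n) k * x^k)" by (rule SW_sum[OF q(1)]) simp
    also have "\<dots> = bc p q (Suc n) 0 * x^0 + (\<Sum>j\<le>Suc n. bc p q (Suc n) (Suc j) * x^Suc j)" by (rule sum.atMost_Suc_shift)
    finally show ?thesis by simp
  qed
  have M0: "SW n x p q = bc p q n 0 + (\<Sum>j\<le>Suc n. bc p q n (Suc j) * x^Suc j)"
  proof -
    have "SW (n) x p q = (\<Sum>k\<le>Suc (Suc n). bc p q (n) k * x^k)" by (rule SW_sum[OF q(1)]) simp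
    also have "\<dots> = bc p q (n) 0 * x^0 + (\<Sum>j\<le>Suc n. bc p q (n) (Suc j) * x^Suc j)" by (rule sum.atMost_Suc_shift)
    finally show ?thesis by simp
  qed
  have X: "x * SW (Suc n) x p q = (\<Sum>j\<le>Suc n. bc p q (Suc n) j * x^Suc j)"
  proof -
    have "SW (Suc n) x p q = (\<Sum>k\<le>Suc n. bc p q (Suc n) k * x^k)" by (rule SW_sum[OF q(1)]) simp
    then have "x * SW (Suc n) x p q = (\<Sum>k\<le>Suc n. x * (bc p q (Suc n) k * x^k))" by (simp only: sum_distrib_left)
    also have "\<dots> = (\<Sum>j\<le>Suc n. bc p q (Suc n) j * x^Suc j)" by (rule sum.cong) (simp_all add: mult_ac)
    finally show ?thesis .
  qed
  have S: "(\<Sum>j\<le>Suc n. bc p q (Suc (Suc n)) (Suc j) * x^Suc j) =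
     (\<Sum>j\<le>Suc n. bc p q (Suc n) j * x^Suc j - cc p q (Suc n) * (bc p q (Suc n) (Suc j) * x^Suc j)
        - lam p q n * (bc p q n (Suc j) * x^Suc j))"
  proof (rule sum.cong)
    fix j assume "j \<in> {..Suc n}"
    then have j: "j \<le> Suc n" by simp
    show "bc p q (Suc (Suc n)) (Suc j) * x^Suc j = bc p q (Suc n) j * x^Suc j - cc p q (Suc n) * (bc p q (Suc n) (Suc j) * x^Suc j)
        - lam p q n * (bc p q n (Suc j) * x^Suc j)"
      unfolding coef_Suc[OF q p j] by (simp add: algebra_simps)
  qed simp
  have S2: "(\<Sum>j\<le>Suc n. bc p q (Suc (Suc n)) (Suc j) * x^Suc j) =
     (\<Sum>j\<le>Suc n. bc p q (Suc n) j * x^Suc j) - cc p q (Suc n) * (\<Sum>j\<le>Suc n. bc p q (Suc n) (Suc j) * x^Suc j)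
        - lam p q n * (\<Sum>j\<le>Suc n. bc p q n (Suc j) * x^Suc j)"
    unfolding S sum_subtractf sum_distrib_left ..
  show ?thesis unfolding L S2 coef_0[OF q p] M1 M0 X[symmetric]
    by (simp add: algebra_simps)
qed

lemma SW_0: "0 < q \<Longrightarrow> SW 0 x p q = 1"
  unfolding SW_def qbinom_def by simp

lemma SW_1:
  assumes q: "0 < q" "q < 1" and p: "p < 1"
  shows "SW (Suc 0) x p q = x - cc p q 0"
proof -
  have "SW (Suc 0) x p q = bc p q 1 0 + bc p q 1 1 * x"
    using SW_sum[OF q(1), of 1 1 x p] by simp
  moreover have "bc p q 1 1 = 1"
    unfolding bc_def qb_def sg_def GG_def using qbinom_self[OF q, of 1] ne_pq[OF q p, of 0] q
    by (simp add: qpoch_Suc field_simps)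
  moreover have "bc p q 1 0 = - cc p q 0"
    unfolding bc_def qb_def sg_def GG_def cc_def using qbinom_0[OF q, of 1] q
    by (simp add: qpoch_Suc field_simps)
  ultimately show ?thesis by simp
qed

lemma pq_lt1:
  assumes q: "0 < q" "q < 1" and p: "p < 1"
  shows "p * q < (1::real)"
proof (cases "p \<le> 0")
  case True
  then have "p*q \<le> 0" using q by (simp add: mult_nonpos_nonneg)
  then show ?thesis by simp
next
  case False
  then have "p*q < 1*1" using q p by (intro mult_strict_mono) auto
  then show ?thesis by simp
qed

lemma kern_rec:
  assumes q: "0 < q" "q < 1" and p: "p < 1"
  shows "kern p q (Suc (Suc m)) x = (x - cc (p*q) q (Suc m) / q) * kern p q (Suc m) x
           - lam (p*q) q m / q^2 * kern p q m x"
proof -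
  have pq: "p*q < 1" by (rule pq_lt1[OF q p])
  have r: "SW (Suc (Suc m)) (q*x) (p*q) q = (q*x - cc (p*q) q (Suc m)) * SW (Suc m) (q*x) (p*q) q - lam (p*q) q m * SW m (q*x) (p*q) q"
    by (rule SW_rec[OF q pq])
  show ?thesis unfolding kern_def r using q by (simp add: field_simps power2_eq_square)
qed

lemma kern_0: "0 < q \<Longrightarrow> kern p q 0 x = 1"
  unfolding kern_def by (simp add: SW_0)

lemma kern_1:
  assumes q: "0 < q" "q < 1" and p: "p < 1"
  shows "kern p q (Suc 0) x = x - cc (p*q) q 0 / q"
  unfolding kern_def SW_1[OF q pq_lt1[OF q p]] using q by (simp add: field_simps)

definition kc :: "real \<Rightarrow> real \<Rightarrow> nat \<Rightarrow> nat \<Rightarrow> real" where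
  "kc p q m k = bc (p*q) q m k * q^k / q^m"

lemma kern_sum:
  assumes q: "0 < q"
  shows "kern p q m x = (\<Sum>k\<le>m. kc p q m k * x^k)"
  unfolding kern_def SW_sum[OF q order_refl] kc_def sum_divide_distrib power_mult_distrib
  by (rule sum.cong) (simp_all add: mult_ac)

lemma kc_top:
  assumes q: "0 < q" "q < 1" and p: "p < 1"
  shows "kc p q m m \<noteq> 0"
proof -
  have pq: "p*q < 1" by (rule pq_lt1[OF q p])
  have "qpoch (p*q) q m > 0" by (rule qpoch_pos[OF q pq])
  moreover have "qb q m m = 1" unfolding qb_def using qbinom_self[OF q] by simp
  moreover have "sg q m \<noteq> 0" unfolding sg_def using q by simp
  moreover have "GG (p*q) q m \<noteq> 0" unfolding GG_def using q qpoch_pos[OF q pq, of m] by simp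
  ultimately show ?thesis unfolding kc_def bc_def using q by simp
qed

lemma coeff_sum_monom': "coeff (\<Sum>k\<le>N. monom (c k) k) i = (if i \<le> N then c i else 0)"
  unfolding coeff_sum coeff_monom by (simp add: sum.delta)

lemma poly_indep:
  fixes f g :: "nat \<Rightarrow> real"
  assumes z: "\<forall>x. a * (\<Sum>k\<le>Suc m. f k * x^k) + b * (\<Sum>k\<le>m. g k * x^k) = 0"
    and f: "f (Suc m) \<noteq> 0" and g: "g m \<noteq> 0"
  shows "a = 0 \<and> b = 0"
proof -
  define P where "P = (\<Sum>k\<le>Suc m. monom (a * f k) k) + (\<Sum>k\<le>m. monom (b * g k) k)"
  have "\<forall>x. poly P x = 0"
  proof
    fix x
    have "poly P x = a * (\<Sum>k\<le>Suc m. f k * x^k) + b * (\<Sum>k\<le>m. g k * x^k)"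
      unfolding P_def poly_add poly_sum poly_monom sum_distrib_left by (simp add: mult_ac)
    then show "poly P x = 0" using z by simp
  qed
  then have P0: "P = 0" using poly_all_0_iff_0 by blast
  have c1: "coeff P (Suc m) = a * f (Suc m)" unfolding P_def coeff_add coeff_sum_monom' by simp
  have c2: "coeff P m = a * f m + b * g m" unfolding P_def coeff_add coeff_sum_monom' by simp
  from c1 P0 f have a: "a = 0" by simp
  from c2 P0 g a have "b = 0" by simp
  with a show ?thesis by simp
qed

definition dd :: "real \<Rightarrow> real \<Rightarrow> nat \<Rightarrow> real" where
  "dd p q n = (1 + q - (1+p)*q^n)/(sqrt q * q^(2*n))"

lemma cc_dd:
  assumes q: "0 < q"
  shows "cc (p*q) q m / q = dd p q (Suc m)"
proof -
  have e: "q^(2*Suc m) = q^(2*m+1) * q" "q^(2*m+1) = q^(2*m)*q" by (simp_all add: power_Suc mult_ac)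
  show ?thesis unfolding cc_def dd_def e using q by (simp add: field_simps) (simp add: algebra_simps)?
qed

lemma lam_nn:
  assumes q: "0 < q"
  shows "lam (p*q) q m / q^2 = (1 - q^(Suc m))*(1 - p*q^(Suc m))/q^(4*m+6)"
proof -
  have "4*m+6 = (4*m+4)+2" by simp
  then have e: "q^(4*m+6) = q^(4*m+4)*q^2" by (metis power_add)
  show ?thesis unfolding lam_def e using q by (simp add: field_simps)
qed

lemma qpi_conv:
  assumes q: "0 < q" "q < 1"
  shows "convergent_prod (\<lambda>k. 1 - a * q^k :: real)"
proof -
  have "summable (\<lambda>k. \<bar>a\<bar> * q^k)" using q by (intro summable_mult summable_geometric) simp
  then have "summable (\<lambda>i. norm ((1 - a * q^i) - 1))" using q by (simp add: abs_mult)
  then show ?thesis by (intro abs_convergent_prod_imp_convergent_prod summable_imp_abs_convergent_prod)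
qed

lemma qpi_shift:
  assumes q: "0 < q" "q < 1"
  shows "qpoch_inf a q = (1 - a) * qpoch_inf (a*q) q"
proof -
  define f where "f = (\<lambda>k. 1 - a * q^k)"
  have g: "(\<lambda>n. f (Suc n)) = (\<lambda>k. 1 - (a*q) * q^k)" unfolding f_def by (simp add: mult_ac)
  have "convergent_prod (\<lambda>n. f (Suc n))" unfolding g by (rule qpi_conv[OF q])
  then have "(\<lambda>n. f (Suc n)) has_prod prodinf (\<lambda>n. f (Suc n))" by (rule convergent_prod_has_prod)
  then have "f has_prod (prodinf (\<lambda>n. f (Suc n)) * f 0)" by (rule has_prod_Suc_imp)
  then have "prodinf f = prodinf (\<lambda>n. f (Suc n)) * f 0" by (simp add: has_prod_iff)
  then show ?thesis unfolding qpoch_inf_def g f_def[symmetric] by (simp add: f_def mult_ac)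
qed

lemma qpi_lim:
  assumes q: "0 < q" "q < 1"
  shows "(\<lambda>n. \<Prod>i\<le>n. 1 - a * q^i) \<longlonglongrightarrow> qpoch_inf a q"
  unfolding qpoch_inf_def by (rule convergent_prod_LIMSEQ[OF qpi_conv[OF q]])

lemma qpi_le1:
  assumes q: "0 < q" "q < 1" and a: "0 \<le> a" "a \<le> 1"
  shows "qpoch_inf a q \<le> 1"
proof (rule LIMSEQ_le_const2[OF qpi_lim[OF q]], intro exI allI impI)
  fix n
  show "(\<Prod>i\<le>n. 1 - a * q^i) \<le> 1"
  proof (rule prod_le_1)
    fix i
    have "a * q^i \<le> 1 * 1" using q a by (intro mult_mono) (auto simp: power_le_one)
    then show "0 \<le> 1 - a * q^i \<and> 1 - a * q^i \<le> 1" using q a by simp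
  qed
qed

lemma qpi_ge:
  assumes q: "0 < q" "q < 1" and a: "0 \<le> a" "a \<le> 1"
  shows "1 - a / (1 - q) \<le> qpoch_inf a q"
proof (rule LIMSEQ_le_const[OF qpi_lim[OF q]], intro exI allI impI)
  fix n
  have b: "\<And>i. a * q^i \<in> {0..1}"
  proof -
    fix i
    have "a * q^i \<le> 1 * 1" using q a by (intro mult_mono) (auto simp: power_le_one)
    then show "a * q^i \<in> {0..1}" using q a by simp
  qed
  have "(\<Sum>i\<le>n. a * q^i) = a * ((1 - q^Suc n)/(1 - q))"
  proof -
    have "(\<Sum>i\<le>n. a * q^i) = a * (\<Sum>i<Suc n. q^i)" by (simp add: sum_distrib_left lessThan_Suc_atMost)
    also have "(\<Sum>i<Suc n. q^i) = (1 - q^Suc n)/(1 - q)" using q by (simp only: sum_gp_strict) simp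
    finally show ?thesis .
  qed
  also have "\<dots> \<le> a * (1/(1-q))" using q a by (intro mult_left_mono divide_right_mono) auto
  finally have s: "(\<Sum>i\<le>n. a * q^i) \<le> a / (1 - q)" by simp
  have "1 - (\<Sum>i\<le>n. a * q^i) \<le> (\<Prod>i\<le>n. 1 - a * q^i)"
    by (rule Weierstrass_prod_ineq) (use b in auto)
  with s show "1 - a / (1 - q) \<le> (\<Prod>i\<le>n. 1 - a * q^i)" by simp
qed

lemma qpi_mono:
  assumes q: "0 < q" "q < 1" and a: "0 \<le> a" "a \<le> b" "b \<le> 1"
  shows "qpoch_inf b q \<le> qpoch_inf a q"
  unfolding qpoch_inf_def
proof (rule prodinf_le)
  show "(\<lambda>k. 1 - b * q^k) has_prod (\<Prod>k. 1 - b * q^k)"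
    by (rule convergent_prod_has_prod[OF qpi_conv[OF q]])
  show "(\<lambda>k. 1 - a * q^k) has_prod (\<Prod>k. 1 - a * q^k)"
    by (rule convergent_prod_has_prod[OF qpi_conv[OF q]])
  fix n
  have "b * q^n \<le> 1 * 1" using q a by (intro mult_mono) (auto simp: power_le_one)
  moreover have "a * q^n \<le> b * q^n" using q a by (intro mult_right_mono) auto
  ultimately show "0 \<le> 1 - b * q^n \<and> 1 - b * q^n \<le> 1 - a * q^n" by simp
qed

lemma qpi_pos:
  assumes q: "0 < q" "q < 1" and a: "0 \<le> a" "a < 1"
  shows "qpoch_inf a q > 0"
proof -
  have ne: "\<And>k. 1 - a * q^k \<noteq> 0"
  proof -
    fix k
    have "a * q^k \<le> a * 1" using q a by (intro mult_left_mono) (auto simp: power_le_one)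
    then show "1 - a * q^k \<noteq> 0" using a by simp
  qed
  have "qpoch_inf a q \<noteq> 0" unfolding qpoch_inf_def by (rule prodinf_nonzero[OF qpi_conv[OF q] ne])
  moreover have "qpoch_inf a q \<ge> 0"
  proof (rule LIMSEQ_le_const[OF qpi_lim[OF q]], intro exI allI impI)
    fix n
    show "0 \<le> (\<Prod>i\<le>n. 1 - a * q^i)"
    proof (rule prod_nonneg)
      fix i
      have "a * q^i \<le> a * 1" using q a by (intro mult_left_mono) (auto simp: power_le_one)
      then show "0 \<le> 1 - a * q^i" using a by simp
    qed
  qed
  ultimately show ?thesis by simp
qed

lemma Delta_parts:
  assumes q: "0 < q" "q < 1" and p: "0 \<le> p" "p < 1"
  shows "qpoch_inf (p*q^n) q = (1 - p*q^n) * qpoch_inf (p*q^Suc n) q"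
    and "qpoch_inf (q^n) q = (1 - q^n) * qpoch_inf (q^Suc n) q"
    and "qpoch_inf (p*q^n) q > 0"
    and "qpoch_inf (q^n) q \<le> qpoch_inf (p*q^n) q"
    and "qpoch_inf (p*q^n) q \<le> 1"
    and "1 - q^n/(1-q) \<le> qpoch_inf (q^n) q"
proof -
  have qn: "0 < q^n" "q^n \<le> 1" using q by (auto simp: power_le_one)
  have pqn: "p*q^n \<le> 1*q^n" using qn p by (intro mult_right_mono) auto
  have "p*q^n \<le> p*1" using qn p by (intro mult_left_mono) auto
  then have pl: "p*q^n < 1" using p by simp
  show "qpoch_inf (p*q^n) q = (1 - p*q^n) * qpoch_inf (p*q^Suc n) q"
    using qpi_shift[OF q, of "p*q^n"] by (simp add: mult_ac)
  show "qpoch_inf (q^n) q = (1 - q^n) * qpoch_inf (q^Suc n) q"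
    using qpi_shift[OF q, of "q^n"] by (simp add: mult_ac)
  show "qpoch_inf (p*q^n) q > 0" using p qn pl by (intro qpi_pos[OF q]) auto
  show "qpoch_inf (q^n) q \<le> qpoch_inf (p*q^n) q"
    by (rule qpi_mono[OF q]) (use p qn pqn \<open>p*q^n < 1\<close> in auto)
  show "qpoch_inf (p*q^n) q \<le> 1"
    by (rule qpi_le1[OF q]) (use p qn pqn pl in auto)
  show "1 - q^n/(1-q) \<le> qpoch_inf (q^n) q"
    by (rule qpi_ge[OF q]) (use qn in auto)
qed

lemma Delta_pos:
  assumes q: "0 < q" "q < 1" and p: "0 \<le> p" "p < 1"
  shows "Delta p q n > 0"
proof -
  note D = Delta_parts[OF q p]
  have "(1 - q^n) * qpoch_inf (q^Suc n) q \<le> (1 - q^n) * qpoch_inf (p*q^Suc n) q"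
    using D(4)[of "Suc n"] q by (intro mult_left_mono) (auto simp: power_le_one)
  also have "\<dots> < (1 - p*q^n) * qpoch_inf (p*q^Suc n) q"
  proof (rule mult_strict_right_mono)
    show "0 < qpoch_inf (p * q ^ Suc n) q" by (rule D(3))
    have "p * q^n < 1 * q^n" using p q by (intro mult_strict_right_mono) auto
    then show "1 - q ^ n < 1 - p * q ^ n" by simp
  qed
  finally show ?thesis unfolding Delta_def D(1)[of n] D(2)[of n] by simp
qed

lemma Delta_le:
  assumes q: "0 < q" "q < 1" and p: "0 \<le> p" "p < 1"
  shows "Delta p q n \<le> q^n / (1 - q)"
  using Delta_parts(5,6)[OF q p, of n] unfolding Delta_def by simp

lemma alg3:
  fixes q p Z A B :: real
  shows "(1+q-(1+p)*(q*Z))*((1-p*(q*Z))*A - (1-q*Z)*B) - q*((1-p*Z)*((1-p*(q*Z))*A) - (1-Z)*((1-q*Z)*B)) = (1-q*Z)*(1-p*(q*Z))*(A - B)"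
  by (simp add: algebra_simps)

lemma Delta_rec:
  assumes q: "0 < q" "q < 1" and p: "0 \<le> p" "p < 1"
  shows "(1 + q - (1+p)*q^(Suc n)) * Delta p q (Suc n) - q * Delta p q n
       = (1 - q^(Suc n)) * (1 - p*q^(Suc n)) * Delta p q (Suc (Suc n))"
proof -
  note D = Delta_parts[OF q p]
  define A where "A = qpoch_inf (p*q^Suc (Suc n)) q"
  define B where "B = qpoch_inf (q^Suc (Suc n)) q"
  have a1: "qpoch_inf (p*q^Suc n) q = (1 - p*q^Suc n) * A" unfolding A_def by (rule D(1))
  have b1: "qpoch_inf (q^Suc n) q = (1 - q^Suc n) * B" unfolding B_def by (rule D(2))
  have a0: "qpoch_inf (p*q^n) q = (1 - p*q^n) * ((1 - p*q^Suc n) * A)" unfolding D(1)[of n] a1 ..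
  have b0: "qpoch_inf (q^n) q = (1 - q^n) * ((1 - q^Suc n) * B)" unfolding D(2)[of n] b1 ..
  have e: "q^Suc n = q * q^n" by simp
  show ?thesis unfolding Delta_def a0 b0 unfolding a1 b1 unfolding A_def[symmetric] B_def[symmetric] unfolding e
    using alg3[of q p "q^n" A B] by simp
qed

definition DD :: "real \<Rightarrow> real \<Rightarrow> nat \<Rightarrow> real" where
  "DD p q m = 1 + q - (1+p)*q^m"

lemma DD_pos:
  assumes q: "0 < q" "q < 1" and p: "0 \<le> p" "p < 1" and m: "1 \<le> m"
  shows "DD p q m > 0"
proof -
  have "q^m \<le> q^1" using q m by (intro power_decreasing) auto
  then have "(1+p)*q^m \<le> (1+p)*q" using p by (intro mult_left_mono) auto
  moreover have "p*q < 1*1" using p q by (intro mult_strict_mono) auto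
  ultimately show ?thesis unfolding DD_def by (simp add: algebra_simps)
qed

lemma dd_DD: "dd p q n = DD p q n / (sqrt q * q^(2*n))"
  unfolding dd_def DD_def ..

lemma beta_alg:
  fixes r A D1 D2 E :: real
  assumes "r > 0" "A > 0" "D1 \<noteq> 0" "D2 \<noteq> 0"
  shows "(E/(A*A*(r * r)*(r * r))) / ((D1/(r*A)) * (D2/(r*(A*(r * r)*(r * r))))) = (r * r)*E/(D1*D2)"
  using assms by (simp add: field_simps)

lemma beta_val:
  assumes q: "0 < q" "q < 1" and p: "0 \<le> p" "p < 1"
  shows "((1 - q^(Suc m))*(1 - p*q^(Suc m))/q^(4*m+6)) / (dd p q (Suc m) * dd p q (Suc (Suc m)))
    = q * (1 - q^(Suc m)) * (1 - p*q^(Suc m)) / (DD p q (Suc m) * DD p q (Suc (Suc m)))"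
proof -
  define r where "r = sqrt q"
  have r: "r > 0" "q = r * r" unfolding r_def using q by simp_all
  define A where "A = q^(2*Suc m)"
  have A: "A > 0" unfolding A_def using q by simp
  have e1: "q^(4*m+6) = A*A*(r * r)*(r * r)"
  proof -
    have "4*m+6 = 2*Suc m + 2*Suc m + 1 + 1" by simp
    then have "q^(4*m+6) = A*A*q*q" unfolding A_def by (metis power_add power_one_right)
    then show ?thesis using r(2) by simp
  qed
  have e2: "q^(2*Suc (Suc m)) = A*(r * r)*(r * r)"
  proof -
    have "2*Suc (Suc m) = 2*Suc m + 1 + 1" by simp
    then have "q^(2*Suc (Suc m)) = A*q*q" unfolding A_def by (metis power_add power_one_right)
    then show ?thesis using r(2) by simp
  qed
  have D1: "DD p q (Suc m) \<noteq> 0" "DD p q (Suc (Suc m)) \<noteq> 0" using DD_pos[OF q p] by (metis less_irrefl le_add1 plus_1_eq_Suc Suc_le_mono zero_le)+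
  show ?thesis unfolding dd_DD e1 e2 A_def[symmetric] r_def[symmetric]
    using beta_alg[OF r(1) A D1, of "(1 - q^(Suc m))*(1 - p*q^(Suc m))"] r(2) by (simp add: mult_ac)
qed

lemma ident:
  fixes p q :: real and d \<nu> :: "nat \<Rightarrow> real"
  assumes q: "0 < q" "q < 1" and p: "p < 1"
    and rec1: "\<forall>x. kern p q 1 x = (x - d 1) * kern p q 0 x"
    and rec: "\<forall>n\<ge>2. \<forall>x. kern p q n x = (x - d n) * kern p q (n - 1) x - \<nu> n * kern p q (n - 2) x"
  shows "\<forall>n\<ge>1. d n = dd p q n"
    and "\<forall>m. \<nu> (Suc (Suc m)) = (1 - q^(Suc m))*(1 - p*q^(Suc m))/q^(4*m+6)"
proof -
  have d1: "d 1 = dd p q 1"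
  proof -
    have "kern p q 1 0 = (0 - d 1) * kern p q 0 0" using rec1 by blast
    then show ?thesis using kern_1[OF q p, of 0] kern_0[OF q(1)] cc_dd[OF q(1), of p 0] by simp
  qed
  have both: "d (Suc (Suc m)) = dd p q (Suc (Suc m)) \<and> \<nu> (Suc (Suc m)) = lam (p*q) q m / q^2" for m
  proof -
    have z: "\<forall>x. (dd p q (Suc (Suc m)) - d (Suc (Suc m))) * (\<Sum>k\<le>Suc m. kc p q (Suc m) k * x^k)
        + (lam (p*q) q m / q^2 - \<nu> (Suc (Suc m))) * (\<Sum>k\<le>m. kc p q m k * x^k) = 0"
    proof
      fix x
      have a: "kern p q (Suc (Suc m)) x = (x - d (Suc (Suc m))) * kern p q (Suc m) x - \<nu> (Suc (Suc m)) * kern p q m x"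
        using rec[rule_format, of "Suc (Suc m)" x] by simp
      have b: "kern p q (Suc (Suc m)) x = (x - dd p q (Suc (Suc m))) * kern p q (Suc m) x - lam (p*q) q m / q^2 * kern p q m x"
        using kern_rec[OF q p, of m x] unfolding cc_dd[OF q(1)] .
      from a b have "(dd p q (Suc (Suc m)) - d (Suc (Suc m))) * kern p q (Suc m) x
        + (lam (p*q) q m / q^2 - \<nu> (Suc (Suc m))) * kern p q m x = 0" by (simp add: algebra_simps)
      then show "(dd p q (Suc (Suc m)) - d (Suc (Suc m))) * (\<Sum>k\<le>Suc m. kc p q (Suc m) k * x^k)
        + (lam (p*q) q m / q^2 - \<nu> (Suc (Suc m))) * (\<Sum>k\<le>m. kc p q m k * x^k) = 0"
        unfolding kern_sum[OF q(1), symmetric] .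
    qed
    have "dd p q (Suc (Suc m)) - d (Suc (Suc m)) = 0 \<and> lam (p*q) q m / q^2 - \<nu> (Suc (Suc m)) = 0"
      by (rule poly_indep[OF z kc_top[OF q p] kc_top[OF q p]])
    then show ?thesis by simp
  qed
  show "\<forall>n\<ge>1. d n = dd p q n"
  proof (intro allI impI)
    fix n :: nat assume "1 \<le> n"
    show "d n = dd p q n"
    proof (cases "n = 1")
      case True
      then show ?thesis using d1 by simp
    next
      case False
      then have "n = Suc (Suc (n - 2))" using \<open>1 \<le> n\<close> by simp
      then show ?thesis using both[of "n - 2"] by metis
    qed
  qed
  show "\<forall>m. \<nu> (Suc (Suc m)) = (1 - q^(Suc m))*(1 - p*q^(Suc m))/q^(4*m+6)"
    using both lam_nn[OF q(1)] by simp
qed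

definition bf :: "real \<Rightarrow> real \<Rightarrow> nat \<Rightarrow> real" where
  "bf p q n = q * (1 - q ^ n) * (1 - p * q ^ n) / ((1 + q - (1 + p) * q ^ n) * (1 + q - (1 + p) * q ^ (n + 1)))"
definition hh :: "real \<Rightarrow> real \<Rightarrow> nat \<Rightarrow> real" where
  "hh p q n = q * (1 - p * q ^ n) / (1 + q - (1 + p) * q ^ (n + 1))"
definition mm :: "real \<Rightarrow> real \<Rightarrow> nat \<Rightarrow> real" where
  "mm p q n = q * (1 - q ^ n) / (1 + q - (1 + p) * q ^ (n + 1))"
definition MM :: "real \<Rightarrow> real \<Rightarrow> nat \<Rightarrow> real" where
  "MM p q n = q / (1 + q - (1 + p) * q ^ (n + 1)) * (Delta p q n / Delta p q (n + 1))"

lemma alg_MM: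
  fixes a b x E D1 D2 :: real
  assumes "D1 \<noteq> 0" "D2 \<noteq> 0"
  shows "(x/b*(D1/D2))*(E*D2/(a*D1)) = x*E/(a*b)"
  using assms by (simp add: field_simps)

context
  fixes p q :: real
  assumes q: "0 < q" "q < 1" and p: "0 \<le> p" "p < 1"
begin

lemma DDs: "1 + q - (1 + p) * q ^ (Suc n) > 0"
  using DD_pos[OF q p, of "Suc n"] unfolding DD_def by simp

lemma qn_lt1: "q^(Suc n) < 1"
proof -
  have "q^n \<le> 1" using q by (simp add: power_le_one)
  then have "q*q^n \<le> q" using q by (simp add: mult_left_le)
  then show ?thesis using q by (simp only: power_Suc)
qed
lemma qn_pos: "q^n > 0" using q by simp
lemma pqn_lt1: "p*q^n < 1"
proof -
  have "p*q^n \<le> p*1" using p q by (intro mult_left_mono) (auto simp: power_le_one)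
  then show ?thesis using p by simp
qed

lemma one_minus_hh: "1 - hh p q k = (1 - q^(Suc k)) / (1 + q - (1 + p) * q ^ (Suc k))"
  using DDs[of k] unfolding hh_def by (simp add: field_simps)

lemma one_minus_mm: "1 - mm p q k = (1 - p*q^(Suc k)) / (1 + q - (1 + p) * q ^ (Suc k))"
  using DDs[of k] unfolding mm_def by (simp add: field_simps)

lemma hh_rel: "hh p q (Suc k) * (1 - hh p q k) = bf p q (Suc k)"
  unfolding one_minus_hh unfolding hh_def bf_def by (simp add: mult_ac)

lemma mm_rel: "mm p q (Suc k) * (1 - mm p q k) = bf p q (Suc k)"
  unfolding one_minus_mm unfolding mm_def bf_def by (simp add: mult_ac)

lemma hh_bounds: "0 < hh p q n \<and> hh p q n < 1"
proof -
  have a: "0 < 1 - p*q^n" using pqn_lt1 by simp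
  have b: "q * (1 - p*q^n) < 1 + q - (1 + p) * q ^ (n+1)"
    using qn_lt1[of n] by (simp add: algebra_simps)
  show ?thesis unfolding hh_def using DDs[of n] a b q by (simp add: field_simps)
qed

lemma mm_bounds: "1 \<le> n \<Longrightarrow> 0 < mm p q n \<and> mm p q n < 1"
proof -
  assume n: "1 \<le> n"
  have a: "0 < 1 - q^n" using q n by (simp add: power_less_one_iff)
  have b: "q * (1 - q^n) < 1 + q - (1 + p) * q ^ (n+1)"
    using pqn_lt1[of "n+1"] by (simp add: algebra_simps)
  show ?thesis unfolding mm_def using DDs[of n] a b q by (simp add: field_simps)
qed

lemma one_minus_MM: "1 - MM p q k = (1 - q^(Suc k)) * (1 - p*q^(Suc k)) * Delta p q (Suc (Suc k))
    / ((1 + q - (1 + p) * q ^ (Suc k)) * Delta p q (Suc k))"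
proof -
  have r: "(1 + q - (1+p)*q^(Suc k)) * Delta p q (Suc k) - q * Delta p q k
       = (1 - q^(Suc k)) * (1 - p*q^(Suc k)) * Delta p q (Suc (Suc k))" by (rule Delta_rec[OF q p])
  have pos: "Delta p q (Suc k) > 0" by (rule Delta_pos[OF q p])
  define X where "X = (1 + q - (1+p)*q^(Suc k)) * Delta p q (Suc k)"
  have X: "X > 0" unfolding X_def using DDs[of k] pos by simp
  have "MM p q k = q * Delta p q k / X" unfolding MM_def X_def by simp
  then have "1 - MM p q k = (X - q * Delta p q k) / X" using X by (simp add: field_simps)
  then show ?thesis unfolding X_def r by simp
qed

lemma MM_rel: "MM p q (Suc k) * (1 - MM p q k) = bf p q (Suc k)"
proof -
  have pos: "Delta p q (Suc k) > 0" "Delta p q (Suc (Suc k)) > 0" by (rule Delta_pos[OF q p])+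
  have "MM p q (Suc k) = q / (1 + q - (1 + p) * q ^ (Suc (Suc k))) * (Delta p q (Suc k) / Delta p q (Suc (Suc k)))"
    unfolding MM_def by simp
  moreover have "bf p q (Suc k) = q * ((1 - q^(Suc k)) * (1 - p*q^(Suc k))) / ((1 + q - (1 + p) * q ^ (Suc k)) * (1 + q - (1 + p) * q ^ (Suc (Suc k))))"
    unfolding bf_def by (simp add: mult_ac)
  ultimately show ?thesis unfolding one_minus_MM
    using alg_MM[of "Delta p q (Suc k)" "Delta p q (Suc (Suc k))" q "1 + q - (1 + p) * q ^ (Suc (Suc k))"
       "(1 - q^(Suc k)) * (1 - p*q^(Suc k))" "1 + q - (1 + p) * q ^ (Suc k)"] pos by simp
qed

lemma MM_bounds: "0 < MM p q n \<and> MM p q n < 1"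
proof -
  have pos: "Delta p q n > 0" "Delta p q (Suc n) > 0" "Delta p q (Suc (Suc n)) > 0" by (rule Delta_pos[OF q p])+
  have "0 < 1 - MM p q n" unfolding one_minus_MM using pos DDs[of n] qn_lt1[of n] pqn_lt1[of "Suc n"]
    by (intro divide_pos_pos mult_pos_pos) auto
  moreover have "0 < MM p q n" unfolding MM_def using pos DDs[of n] q by simp
  ultimately show ?thesis by simp
qed

end

lemma alg_r:
  fixes q A B d1 d2 E :: real
  assumes "A \<noteq> 0" "B \<noteq> 0" "d1 \<noteq> 0" "d2 \<noteq> 0"
  shows "q * A * d1 ^ 2 / (B * d2 ^ 2) * (E * d2 / (A * d1)) = E * (q / B * (d1 / d2))"
  using assms by (simp add: field_simps power2_eq_square)

context
  fixes p q :: real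
  assumes q: "0 < q" "q < 1" and p: "0 \<le> p" "p < 1"
begin

lemma MM_max:
  assumes ps: "param_seq \<beta> g" and bb: "\<forall>n\<ge>1. \<beta> n = bf p q n"
  shows "g 0 \<le> MM p q 0"
proof (rule ccontr)
  assume "\<not> g 0 \<le> MM p q 0"
  then have d0: "g 0 - MM p q 0 > 0" by simp
  define \<delta> where "\<delta> k = g k - MM p q k" for k
  define Dl where "Dl = Delta p q"
  define X where "X k = 1 + q - (1+p)*q^(Suc k)" for k
  have Xpos: "X k > 0" for k unfolding X_def by (rule DDs[OF q p])
  have Dlpos: "Dl k > 0" for k unfolding Dl_def by (rule Delta_pos[OF q p])
  define c0 where "c0 = X 0 * Dl 1 ^ 2"
  have c0: "c0 > 0" unfolding c0_def using Xpos[of 0] Dlpos[of 1] by simp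
  define \<Phi> where "\<Phi> k = \<delta> 0 * q^k * c0 / (X k * Dl (Suc k) ^ 2)" for k
  define r where "r k = q * X k * Dl (Suc k) ^ 2 / (X (Suc k) * Dl (Suc (Suc k)) ^ 2)" for k
  have rel_g: "\<beta> (Suc k) = g (Suc k) * (1 - g k)" for k using ps unfolding param_seq_def by auto
  have rel_M: "\<beta> (Suc k) = MM p q (Suc k) * (1 - MM p q k)" for k using bb MM_rel[OF q p, of k] by simp
  have g1: "g k < 1" for k using ps unfolding param_seq_def by (cases k) auto
  have Mb: "0 < MM p q k \<and> MM p q k < 1" for k by (rule MM_bounds[OF q p])
  have Phi_step: "\<Phi> (Suc k) = \<Phi> k * r k" for k
    unfolding \<Phi>_def r_def using Xpos[of k] Dlpos[of "Suc k"] q by (simp add: field_simps)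
  have Mr: "r k * (1 - MM p q k) \<le> MM p q (Suc k)" for k
  proof -
    define E where "E = (1 - q^(Suc k)) * (1 - p*q^(Suc k))"
    have E: "0 \<le> E" "E \<le> 1"
    proof -
      have a: "0 < 1 - q^(Suc k)" "1 - q^(Suc k) \<le> 1" using qn_lt1[OF q p, of k] q by auto
      have b: "0 < 1 - p*q^(Suc k)" "1 - p*q^(Suc k) \<le> 1" using pqn_lt1[OF q p, of "Suc k"] p q by auto
      show "0 \<le> E" unfolding E_def using a b by simp
      show "E \<le> 1" unfolding E_def using a b by (metis less_imp_le mult_le_one)
    qed
    have m1: "MM p q (Suc k) = q / X (Suc k) * (Dl (Suc k) / Dl (Suc (Suc k)))"
      unfolding MM_def X_def Dl_def by simp
    have m0: "1 - MM p q k = E * Dl (Suc (Suc k)) / (X k * Dl (Suc k))"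
      unfolding one_minus_MM[OF q p] E_def X_def Dl_def ..
    have "r k * (1 - MM p q k) = E * MM p q (Suc k)"
      unfolding r_def m0 m1
      by (rule alg_r) (use Dlpos[of "Suc k"] Dlpos[of "Suc (Suc k)"] Xpos[of k] Xpos[of "Suc k"] in auto)
    also have "\<dots> \<le> 1 * MM p q (Suc k)" using E Mb[of "Suc k"] by (intro mult_right_mono) auto
    finally show ?thesis by simp
  qed
  have claim: "\<delta> k > 0 \<and> \<Phi> k \<le> \<delta> k" for k
  proof (induction k)
    case 0
    have "\<Phi> 0 = \<delta> 0" unfolding \<Phi>_def c0_def using Xpos[of 0] Dlpos[of 1] by simp
    then show ?case using d0 unfolding \<delta>_def by simp
  next
    case (Suc k)
    define u where "u = 1 - g k"
    define v where "v = 1 - MM p q k"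
    have u: "u > 0" unfolding u_def using g1 by simp
    have v: "v > 0" unfolding v_def using Mb by simp
    have uv: "u \<le> v" unfolding u_def v_def using Suc.IH unfolding \<delta>_def by simp
    have key: "\<delta> (Suc k) * u = MM p q (Suc k) * \<delta> k"
    proof -
      have "g (Suc k) * u = MM p q (Suc k) * v" unfolding u_def v_def using rel_g rel_M by metis
      then show ?thesis unfolding \<delta>_def u_def v_def by (simp add: algebra_simps)
    qed
    have ds: "\<delta> (Suc k) = MM p q (Suc k) * \<delta> k / u" using key u by (simp add: field_simps)
    have pos: "\<delta> (Suc k) > 0" unfolding ds using Mb Suc.IH u by simp
    have "MM p q (Suc k) * \<delta> k / v \<le> MM p q (Suc k) * \<delta> k / u"
      using uv u v Mb[of "Suc k"] Suc.IH by (intro divide_left_mono) auto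
    moreover have "r k * \<delta> k \<le> MM p q (Suc k) * \<delta> k / v"
    proof -
      have "r k * v * \<delta> k \<le> MM p q (Suc k) * \<delta> k" using Mr[of k] Suc.IH unfolding v_def
        by (intro mult_right_mono) auto
      then show ?thesis using v by (simp add: field_simps)
    qed
    moreover have "\<Phi> (Suc k) \<le> r k * \<delta> k"
    proof -
      have "r k \<ge> 0" unfolding r_def using Xpos[of k] Xpos[of "Suc k"] Dlpos[of "Suc k"] Dlpos[of "Suc (Suc k)"] q by simp
      then have "r k * \<Phi> k \<le> r k * \<delta> k" using Suc.IH by (intro mult_left_mono) auto
      then show ?thesis unfolding Phi_step by (simp add: mult_ac)
    qed
    ultimately show ?case using pos ds by simp
  qed
  define C where "C = \<delta> 0 * c0 * (1 - q)^2 / (2 * q^2)"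
  have C: "C > 0" unfolding C_def using d0 c0 q unfolding \<delta>_def by simp
  obtain k where k: "q^k < C" using real_arch_pow_inv[OF C q(2)] by blast
  have lb: "C / q^k \<le> \<Phi> k"
  proof -
    have "0 \<le> (1+p)*q^(Suc k)" using p q by simp
    then have X2: "X k \<le> 2" unfolding X_def using q by linarith
    have Dle: "Dl (Suc k) \<le> q^(Suc k)/(1-q)" unfolding Dl_def by (rule Delta_le[OF q p])
    have "Dl (Suc k) ^ 2 \<le> (q^(Suc k)/(1-q))^2" using Dle Dlpos[of "Suc k"] by (intro power_mono) auto
    then have den: "X k * Dl (Suc k) ^ 2 \<le> 2 * (q^(Suc k)/(1-q))^2"
      using X2 Xpos[of k] Dlpos[of "Suc k"] by (intro mult_mono) auto
    have "\<delta> 0 * q^k * c0 / (2 * (q^(Suc k)/(1-q))^2) \<le> \<delta> 0 * q^k * c0 / (X k * Dl (Suc k) ^ 2)"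
      using den Xpos[of k] Dlpos[of "Suc k"] d0 c0 q unfolding \<delta>_def
      by (intro divide_left_mono) auto
    moreover have "\<delta> 0 * q^k * c0 / (2 * (q^(Suc k)/(1-q))^2) = C / q^k"
      unfolding C_def using q by (simp add: field_simps power2_eq_square)
    ultimately show ?thesis unfolding \<Phi>_def by simp
  qed
  have "1 < C / q^k" using k q by simp
  moreover have "\<delta> k < 1" unfolding \<delta>_def using g1[of k] Mb[of k] by simp
  ultimately show False using lb claim[of k] by simp
qed

end

lemma algb:
  fixes r Z X0 X1 Q P :: real
  assumes "r > 0" "Z > 0" "X0 \<noteq> 0" "X1 \<noteq> 0"
  shows "(1 - Q)/X0 * (X0/(r*Z)) + (r*r)*P/X1 * (X1/(r*(Z*(r*r)*(r*r)))) = (1 - Q)/(r*Z) + P/(r*(Z*(r*r)))"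
  using assms by (simp add: field_simps)

lemma algc:
  fixes r Z X0 Q P :: real
  assumes "r > 0" "Z > 0" "X0 \<noteq> 0"
  shows "(1 - Q)/X0 * ((r*r)*P/X0) * (X0/(r*Z))^2 = (1 - Q)*P/(Z*Z)"
  using assms by (simp add: field_simps power2_eq_square)

context
  fixes p q :: real
  assumes q: "0 < q" "q < 1" and p: "0 \<le> p" "p < 1"
begin

lemma shell_b: "(1 - hh p q n) * dd p q (Suc n) + hh p q (Suc n) * dd p q (Suc (Suc n)) = cc p q (Suc n)"
proof -
  define r where "r = sqrt q"
  have r: "r > 0" "q = r * r" unfolding r_def using q by simp_all
  define Z where "Z = q^(2*Suc n)"
  have Z: "Z > 0" unfolding Z_def using q by simp
  define X0 where "X0 = 1 + q - (1 + p) * q ^ (Suc n)"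
  define X1 where "X1 = 1 + q - (1 + p) * q ^ (Suc (Suc n))"
  have X: "X0 \<noteq> 0" "X1 \<noteq> 0" unfolding X0_def X1_def using DDs[OF q p, of n] DDs[OF q p, of "Suc n"] by auto
  have e1: "1 - hh p q n = (1 - q^(Suc n))/X0" unfolding X0_def by (rule one_minus_hh[OF q p])
  have e2: "dd p q (Suc n) = X0/(r*Z)" unfolding dd_def X0_def r_def Z_def ..
  have e3: "hh p q (Suc n) = (r*r)*(1 - p*q^(Suc n))/X1" unfolding hh_def X1_def r(2)[symmetric] by simp
  have e4: "dd p q (Suc (Suc n)) = X1/(r*(Z*(r*r)*(r*r)))"
  proof -
    have "2*Suc (Suc n) = 2*Suc n + 1 + 1" by simp
    then have "q^(2*Suc (Suc n)) = Z*q*q" unfolding Z_def by (metis power_add power_one_right)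
    then have h: "q^(2*Suc (Suc n)) = Z*(r*r)*(r*r)" using r(2) by simp
    show ?thesis unfolding dd_def r_def[symmetric] h X1_def ..
  qed
  have e5: "cc p q (Suc n) = (1 - q^(Suc n))/(r*Z) + (1 - p*q^(Suc n))/(r*(Z*(r*r)))"
  proof -
    have "q^(2*Suc n + 1) = Z*q" unfolding Z_def by simp
    then show ?thesis unfolding cc_def Z_def[symmetric] r_def[symmetric] using r(2) by simp
  qed
  show ?thesis unfolding e1 e2 e3 e4 e5 by (rule algb[OF r(1) Z X])
qed

lemma shell_c: "(1 - hh p q n) * hh p q n * (dd p q (Suc n))^2 = lam p q n"
proof -
  define r where "r = sqrt q"
  have r: "r > 0" "q = r * r" unfolding r_def using q by simp_all
  define Z where "Z = q^(2*Suc n)"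
  have Z: "Z > 0" unfolding Z_def using q by simp
  define X0 where "X0 = 1 + q - (1 + p) * q ^ (Suc n)"
  have X: "X0 \<noteq> 0" unfolding X0_def using DDs[OF q p, of n] by auto
  have e1: "1 - hh p q n = (1 - q^(Suc n))/X0" unfolding X0_def by (rule one_minus_hh[OF q p])
  have e2: "dd p q (Suc n) = X0/(r*Z)" unfolding dd_def X0_def r_def Z_def ..
  have e3: "hh p q n = (r*r)*(1 - p*q^n)/X0" unfolding hh_def X0_def r(2)[symmetric] by simp
  have e5: "lam p q n = (1 - q^(Suc n))*(1 - p*q^n)/(Z*Z)"
  proof -
    have "4*n+4 = 2*Suc n + 2*Suc n" by simp
    then have "q^(4*n+4) = Z*Z" unfolding Z_def by (metis power_add)
    then show ?thesis unfolding lam_def by simp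
  qed
  show ?thesis unfolding e1 unfolding e2 e3 e5 by (rule algc[OF r(1) Z X])
qed

lemma shell_a: "hh p q 0 * dd p q 1 = cc p q 0"
proof -
  define r where "r = sqrt q"
  have r: "r > 0" "q = r * r" unfolding r_def using q by simp_all
  define X where "X = 1 + q - (1 + p) * q"
  have X: "X \<noteq> 0" unfolding X_def using DDs[OF q p, of 0] by simp
  have e1: "hh p q 0 = q*(1-p)/X" unfolding hh_def X_def by simp
  have e2: "dd p q 1 = X/(r*(q*q))" unfolding dd_def X_def r_def by (simp add: power2_eq_square)
  have e3: "cc p q 0 = (1-p)/(r*q)" unfolding cc_def r_def by simp
  show ?thesis unfolding e1 e2 e3 using X r q by (simp add: field_simps)
qed

lemma shell_SW:
  assumes dd: "\<forall>n\<ge>1. d n = dd p q n"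
  shows "shell (hh p q) d n x = SW n x p q"
proof (induction n rule: less_induct)
  case (less n)
  have d1: "d 1 = dd p q 1" using dd by simp
  show ?case
  proof (cases n)
    case 0
    then show ?thesis using SW_0[OF q(1)] by simp
  next
    case (Suc k)
    show ?thesis
    proof (cases k)
      case 0
      have "shell (hh p q) d (Suc 0) x = x - cc p q 0" using d1 shell_a by simp
      then show ?thesis using Suc 0 SW_1[OF q(1,2) p(2)] by simp
    next
      case (Suc m)
      have n: "n = Suc (Suc m)" using \<open>n = Suc k\<close> Suc by simp
      have ih1: "shell (hh p q) d (Suc m) x = SW (Suc m) x p q" using less.IH n by simp
      have ih0: "shell (hh p q) d m x = SW m x p q" using less.IH n by simp
      have da: "d (Suc m) = dd p q (Suc m)" "d (Suc (Suc m)) = dd p q (Suc (Suc m))" using dd by simp_all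
      have "shell (hh p q) d (Suc (Suc m)) x = (x - cc p q (Suc m)) * SW (Suc m) x p q - lam p q m * SW m x p q"
        unfolding shell.simps da ih1 ih0 shell_b shell_c ..
      then show ?thesis unfolding n SW_rec[OF q(1,2) p(2)] .
    qed
  qed
qed
end

lemma ps_intro:
  assumes "0 \<le> f 0" "f 0 < 1" "\<And>n. 1 \<le> n \<Longrightarrow> 0 < f n \<and> f n < 1"
    and "\<And>k. \<beta> (Suc k) = f (Suc k) * (1 - f k)"
  shows "param_seq \<beta> f"
  unfolding param_seq_def
proof (intro conjI allI impI)
  fix n :: nat assume "1 \<le> n"
  then obtain k where k: "n = Suc k" by (cases n) auto
  show "\<beta> n = f n * (1 - f (n - 1))" unfolding k using assms(4) by simp
qed (use assms in auto)

theorem theorem6: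
  fixes p q :: real and d \<nu> \<beta> :: "nat \<Rightarrow> real"
  assumes "0 < q" and "q < 1" and "0 \<le> p" and "p < 1"
    and rec1: "\<forall>x. kern p q 1 x = (x - d 1) * kern p q 0 x"
    and rec: "\<forall>n\<ge>2. \<forall>x. kern p q n x = (x - d n) * kern p q (n - 1) x - \<nu> n * kern p q (n - 2) x"
    and beta_def: "\<forall>n\<ge>1. \<beta> n = \<nu> (n + 1) / (d n * d (n + 1))"
  shows "(\<forall>n\<ge>1. \<beta> n = q * (1 - q ^ n) * (1 - p * q ^ n) /
            ((1 + q - (1 + p) * q ^ n) * (1 + q - (1 + p) * q ^ (n + 1))))
    \<and> maximal_param_seq \<beta> (\<lambda>n. q / (1 + q - (1 + p) * q ^ (n + 1)) * (Delta p q n / Delta p q (n + 1)))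
    \<and> minimal_param_seq \<beta> (\<lambda>n. q * (1 - q ^ n) / (1 + q - (1 + p) * q ^ (n + 1)))
    \<and> param_seq \<beta> (\<lambda>n. q * (1 - p * q ^ n) / (1 + q - (1 + p) * q ^ (n + 1)))
    \<and> (\<forall>n x. shell (\<lambda>n. q * (1 - p * q ^ n) / (1 + q - (1 + p) * q ^ (n + 1))) d n x = SW n x p q)"
proof -
  have q: "0 < q" "q < 1" and p: "0 \<le> p" "p < 1" using assms by auto
  note id = ident[OF q p(2) rec1 rec]
  have bb: "\<forall>n\<ge>1. \<beta> n = bf p q n"
  proof (intro allI impI)
    fix n :: nat assume "1 \<le> n"
    then obtain m where m: "n = Suc m" by (cases n) auto
    have "\<beta> n = \<nu> (Suc (Suc m)) / (d (Suc m) * d (Suc (Suc m)))" using beta_def \<open>1 \<le> n\<close> m by simp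
    also have "\<dots> = ((1 - q^(Suc m))*(1 - p*q^(Suc m))/q^(4*m+6)) / (dd p q (Suc m) * dd p q (Suc (Suc m)))"
      using id by simp
    also have "\<dots> = q * (1 - q^(Suc m)) * (1 - p*q^(Suc m)) / (DD p q (Suc m) * DD p q (Suc (Suc m)))"
      by (rule beta_val[OF q p])
    also have "\<dots> = bf p q n" unfolding m bf_def DD_def by simp
    finally show "\<beta> n = bf p q n" .
  qed
  have eM: "(\<lambda>n. q / (1 + q - (1 + p) * q ^ (n + 1)) * (Delta p q n / Delta p q (n + 1))) = MM p q"
    by (simp add: fun_eq_iff MM_def)
  have em: "(\<lambda>n. q * (1 - q ^ n) / (1 + q - (1 + p) * q ^ (n + 1))) = mm p q"
    by (simp add: fun_eq_iff mm_def)
  have eh: "(\<lambda>n. q * (1 - p * q ^ n) / (1 + q - (1 + p) * q ^ (n + 1))) = hh p q"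
    by (simp add: fun_eq_iff hh_def)
  have psM: "param_seq \<beta> (MM p q)"
  proof (rule ps_intro)
    show "0 \<le> MM p q 0" "MM p q 0 < 1" using MM_bounds[OF q p, of 0] by auto
    show "\<And>n. 1 \<le> n \<Longrightarrow> 0 < MM p q n \<and> MM p q n < 1" using MM_bounds[OF q p] by blast
    show "\<And>k. \<beta> (Suc k) = MM p q (Suc k) * (1 - MM p q k)" using bb MM_rel[OF q p] by simp
  qed
  have psm: "param_seq \<beta> (mm p q)"
  proof (rule ps_intro)
    show "0 \<le> mm p q 0" "mm p q 0 < 1" unfolding mm_def by simp_all
    show "\<And>n. 1 \<le> n \<Longrightarrow> 0 < mm p q n \<and> mm p q n < 1" using mm_bounds[OF q p] by blast
    show "\<And>k. \<beta> (Suc k) = mm p q (Suc k) * (1 - mm p q k)" using bb mm_rel[OF q p] by simp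
  qed
  have psh: "param_seq \<beta> (hh p q)"
  proof (rule ps_intro)
    show "0 \<le> hh p q 0" "hh p q 0 < 1" using hh_bounds[OF q p, of 0] by auto
    show "\<And>n. 1 \<le> n \<Longrightarrow> 0 < hh p q n \<and> hh p q n < 1" using hh_bounds[OF q p] by blast
    show "\<And>k. \<beta> (Suc k) = hh p q (Suc k) * (1 - hh p q k)" using bb hh_rel[OF q p] by simp
  qed
  have maxM: "maximal_param_seq \<beta> (MM p q)"
    unfolding maximal_param_seq_def using psM MM_max[OF q p _ bb] by blast
  have minm: "minimal_param_seq \<beta> (mm p q)"
    unfolding minimal_param_seq_def using psm by (simp add: mm_def)
  have sh: "\<forall>n x. shell (hh p q) d n x = SW n x p q"
    using shell_SW[OF q p id(1)] by blast
  have bform: "\<forall>n\<ge>1. \<beta> n = q * (1 - q ^ n) * (1 - p * q ^ n) /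
            ((1 + q - (1 + p) * q ^ n) * (1 + q - (1 + p) * q ^ (n + 1)))"
    using bb unfolding bf_def .
  show ?thesis unfolding eM em eh using bform maxM minm psh sh by blast
qed

end
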